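(* Consider the infinite-horizon model below and suppose $\epsilon_2\ge0$; fix all parameters other than $\epsilon_1$. (i) There exists $\bar{\epsilon}_{RPE}\in[-\infty,\infty)$ such that for every $\epsilon_1\in\mathbb{R}$, the infinite-horizon model admits an infinite-horizon RPE if and only if $\epsilon_1\ge\bar{\epsilon}_{RPE}$, and the Euler-equation model (same $\beta,\sigma,\lambda,\mu,\psi,p,q,\epsilon_2$) admits an Euler-equation RPE if and only if $\epsilon_1\ge\bar{\epsilon}_{RPE}$; moreover $\bar{\epsilon}_{RPE}=-\infty$ if $q=1$. (ii) Let $\bar{\epsilon}_{REE}\in[-\infty,\infty)$ be the number such that the Euler-equation model admits a rational expectations equilibrium (REE) if and only if $\epsilon_1\ge\bar{\epsilon}_{REE}$. Then $\bar{\epsilon}_{REE}\ge\bar{\epsilon}_{RPE}$ if and only if $p+q\ge1$.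
   Context: Parameters: $0<\beta<1$, $\xi\in(0,1)$, $\lambda:=(1-\xi\beta)(1-\xi)/\xi$, $\sigma,\mu>0$, $\psi>1$, $p,q\in(0,1]$ with $(p,q)\neq(1,1)$. The shock $\epsilon_t$ is a two-state Markov chain on $\{\epsilon_1,\epsilon_2\}$ with $\Pr(\epsilon_{t+1}=\epsilon_1\mid\epsilon_t=\epsilon_1)=p$, $\Pr(\epsilon_{t+1}=\epsilon_2\mid\epsilon_t=\epsilon_2)=q$; $\bar q:=(1-p)/(2-p-q)$. Infinite-horizon model: $x_t=-\sigma i_t+\hat E_t\sum_{T\ge t}\beta^{T-t}\big((1-\beta)x_{T+1}+\sigma\pi_{T+1}-\sigma\beta i_{T+1}+\epsilon_T\big)$, $\pi_t=\lambda x_t+\hat E_t\sum_{T\ge t}(\xi\beta)^{T-t}\big(\xi\beta\lambda x_{T+1}+(1-\xi)\beta\pi_{T+1}\big)$, $i_t=\max\{\psi\pi_t,-\mu\}$. An infinite-horizon RPE is a state-contingent vector $(x_j,\pi_j,i_j)$, $j=1,2$, such that the three equations hold in each state $j$ when $\epsilon_t=\epsilon_j$ is observed and agents set $\hat E_t z_T=E(z):=\bar q z_2+(1-\bar q)z_1$ for all $T>t$ and $z\in\{x,\pi,i,\epsilon\}$. Euler-equation model: $x_t=\hat E_t x_{t+1}-\sigma(i_t-\hat E_t\pi_{t+1})+\epsilon_t$, $\pi_t=\lambda x_t+\beta\hat E_t\pi_{t+1}$, $i_t=\max\{\psi\pi_t,-\mu\}$. For $Y_j=(x_j,\pi_j)$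 and forecasts $Y^e_j=(x^e_j,\pi^e_j)$, $j=1,2$, $(Y_1,Y_2)$ solves the Euler model given the forecasts if $x_j=x^e_j-\sigma(\max\{\psi\pi_j,-\mu\}-\pi^e_j)+\epsilon_j$, $\pi_j=\lambda x_j+\beta\pi^e_j$ for $j=1,2$. An Euler-equation RPE uses $Y^e_1=Y^e_2=\bar qY_2+(1-\bar q)Y_1$; an REE uses $Y^e_1=pY_1+(1-p)Y_2$, $Y^e_2=(1-q)Y_1+qY_2$. *)

theory Defs
  imports Complex_Main "HOL-Library.Extended_Real"
begin

definition lam :: "real \<Rightarrow> real \<Rightarrow> real" where
  "lam \<beta> \<xi> = (1 - \<xi> * \<beta>) * (1 - \<xi>) / \<xi>"

text \<open>qbar := (1-p)/(2-p-q), the stationary probability of state 2\<close>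
definition qbar :: "real \<Rightarrow> real \<Rightarrow> real" where
  "qbar p q = (1 - p) / (2 - p - q)"

definition Eavg :: "real \<Rightarrow> real \<Rightarrow> real \<Rightarrow> real \<Rightarrow> real" where
  "Eavg p q z1 z2 = qbar p q * z2 + (1 - qbar p q) * z1"

text \<open>The three infinite-horizon equations in a state where the shock eps is observed,
  with forecasts Fx, Fpi, Fi, Feps of x, pi, i, eps at all future dates T > t.
  The n-th summand corresponds to T = t + n; at T = t the current shock is known.\<close>
definition ih_eqs ::
  "real \<Rightarrow> real \<Rightarrow> real \<Rightarrow> real \<Rightarrow> real \<Rightarrow> real \<Rightarrow>
   real \<Rightarrow> real \<Rightarrow> real \<Rightarrow> real \<Rightarrow> real \<Rightarrow> real \<Rightarrow> real \<Rightarrow> bool" where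
  "ih_eqs \<beta> \<xi> \<sigma> \<mu> \<psi> Fx F\<pi> Fi Feps eps x \<pi> i \<longleftrightarrow>
     x = - \<sigma> * i + (\<Sum>n. \<beta> ^ n * ((1 - \<beta>) * Fx + \<sigma> * F\<pi> - \<sigma> * \<beta> * Fi
                                      + (if n = 0 then eps else Feps))) \<and>
     \<pi> = lam \<beta> \<xi> * x + (\<Sum>n. (\<xi> * \<beta>) ^ n * (\<xi> * \<beta> * lam \<beta> \<xi> * Fx + (1 - \<xi>) * \<beta> * F\<pi>)) \<and>
     i = max (\<psi> * \<pi>) (- \<mu>)"

definition ih_RPE_exists ::
  "real \<Rightarrow> real \<Rightarrow> real \<Rightarrow> real \<Rightarrow> real \<Rightarrow> real \<Rightarrow> real \<Rightarrow> real \<Rightarrow> real \<Rightarrow> bool" where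
  "ih_RPE_exists \<beta> \<xi> \<sigma> \<mu> \<psi> p q e1 e2 \<longleftrightarrow>
     (\<exists>x1 \<pi>1 i1 x2 \<pi>2 i2.
        ih_eqs \<beta> \<xi> \<sigma> \<mu> \<psi> (Eavg p q x1 x2) (Eavg p q \<pi>1 \<pi>2) (Eavg p q i1 i2) (Eavg p q e1 e2)
               e1 x1 \<pi>1 i1 \<and>
        ih_eqs \<beta> \<xi> \<sigma> \<mu> \<psi> (Eavg p q x1 x2) (Eavg p q \<pi>1 \<pi>2) (Eavg p q i1 i2) (Eavg p q e1 e2)
               e2 x2 \<pi>2 i2)"

definition euler_solves ::
  "real \<Rightarrow> real \<Rightarrow> real \<Rightarrow> real \<Rightarrow> real \<Rightarrow> real \<Rightarrow> real \<Rightarrow>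
   real \<Rightarrow> real \<Rightarrow> real \<Rightarrow> real \<Rightarrow> real \<Rightarrow> real \<Rightarrow> real \<Rightarrow> real \<Rightarrow> bool" where
  "euler_solves \<beta> la \<sigma> \<mu> \<psi> e1 e2 x1 \<pi>1 x2 \<pi>2 xe1 \<pi>e1 xe2 \<pi>e2 \<longleftrightarrow>
     x1 = xe1 - \<sigma> * (max (\<psi> * \<pi>1) (- \<mu>) - \<pi>e1) + e1 \<and> \<pi>1 = la * x1 + \<beta> * \<pi>e1 \<and>
     x2 = xe2 - \<sigma> * (max (\<psi> * \<pi>2) (- \<mu>) - \<pi>e2) + e2 \<and> \<pi>2 = la * x2 + \<beta> * \<pi>e2"

definition euler_RPE_exists ::
  "real \<Rightarrow> real \<Rightarrow> real \<Rightarrow> real \<Rightarrow> real \<Rightarrow> real \<Rightarrow> real \<Rightarrow> real \<Rightarrow> real \<Rightarrow> bool" where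
  "euler_RPE_exists \<beta> la \<sigma> \<mu> \<psi> p q e1 e2 \<longleftrightarrow>
     (\<exists>x1 \<pi>1 x2 \<pi>2.
        euler_solves \<beta> la \<sigma> \<mu> \<psi> e1 e2 x1 \<pi>1 x2 \<pi>2
          (Eavg p q x1 x2) (Eavg p q \<pi>1 \<pi>2) (Eavg p q x1 x2) (Eavg p q \<pi>1 \<pi>2))"

definition euler_REE_exists ::
  "real \<Rightarrow> real \<Rightarrow> real \<Rightarrow> real \<Rightarrow> real \<Rightarrow> real \<Rightarrow> real \<Rightarrow> real \<Rightarrow> real \<Rightarrow> bool" where
  "euler_REE_exists \<beta> la \<sigma> \<mu> \<psi> p q e1 e2 \<longleftrightarrow>
     (\<exists>x1 \<pi>1 x2 \<pi>2.
        euler_solves \<beta> la \<sigma> \<mu> \<psi> e1 e2 x1 \<pi>1 x2 \<pi>2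
          (p * x1 + (1 - p) * x2) (p * \<pi>1 + (1 - p) * \<pi>2)
          ((1 - q) * x1 + q * x2) ((1 - q) * \<pi>1 + q * \<pi>2))"

end

theory Submission
  imports Defs
begin


definition mm :: "real \<Rightarrow> real \<Rightarrow> real \<Rightarrow> real \<Rightarrow> real" where
  "mm \<sigma> \<psi> w \<kappa> = min ((1-w)*\<sigma>/\<kappa>) (w*\<sigma>*(\<psi>-1)/(\<kappa>+\<sigma>*\<psi>))"

definition gst :: "real \<Rightarrow> real \<Rightarrow> real \<Rightarrow> real" where
  "gst \<sigma> \<mu> \<psi> = \<sigma>*(\<mu>/\<psi> - \<mu>)"

lemma mm_facts:
  assumes "\<sigma> > 0" "\<psi> > 1" "0 \<le> w" "w < 1" "\<kappa> > 0"
  shows "mm \<sigma> \<psi> w \<kappa> \<ge> 0" "mm \<sigma> \<psi> w \<kappa> * \<kappa> \<le> (1-w)*\<sigma>"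
    "mm \<sigma> \<psi> w \<kappa> * (\<kappa>+\<sigma>*\<psi>) \<le> w*\<sigma>*(\<psi>-1)" "mm \<sigma> \<psi> w \<kappa> \<le> w"
proof -
  have "\<sigma>*\<psi> > 0" using assms by simp
  then have k2: "\<kappa>+\<sigma>*\<psi> > 0" using assms by linarith
  have a: "(1-w)*\<sigma>/\<kappa> \<ge> 0" using assms by simp
  have b: "w*\<sigma>*(\<psi>-1)/(\<kappa>+\<sigma>*\<psi>) \<ge> 0" using assms k2 by simp
  show "mm \<sigma> \<psi> w \<kappa> \<ge> 0" using a b by (simp add: mm_def)
  have "mm \<sigma> \<psi> w \<kappa> \<le> (1-w)*\<sigma>/\<kappa>" by (simp add: mm_def)
  then show "mm \<sigma> \<psi> w \<kappa> * \<kappa> \<le> (1-w)*\<sigma>" using assms by (simp add: pos_le_divide_eq)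
  have c: "mm \<sigma> \<psi> w \<kappa> \<le> w*\<sigma>*(\<psi>-1)/(\<kappa>+\<sigma>*\<psi>)" by (simp add: mm_def)
  then show "mm \<sigma> \<psi> w \<kappa> * (\<kappa>+\<sigma>*\<psi>) \<le> w*\<sigma>*(\<psi>-1)" using k2 by (simp add: pos_le_divide_eq)
  have "\<sigma>*(\<psi>-1) \<le> \<kappa>+\<sigma>*\<psi>" using assms by (simp add: algebra_simps)
  then have "w*(\<sigma>*(\<psi>-1)) \<le> w*(\<kappa>+\<sigma>*\<psi>)" using assms by (simp add: mult_left_mono)
  then have "w*\<sigma>*(\<psi>-1)/(\<kappa>+\<sigma>*\<psi>) \<le> w" using k2 by (simp add: divide_le_eq mult.assoc)
  then show "mm \<sigma> \<psi> w \<kappa> \<le> w" using c by linarith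
qed

lemma fL: fixes \<psi> ps \<mu> z f G \<sigma> :: real assumes "\<psi> > 0" "\<psi>*ps = -\<mu>" "z \<le> ps" shows "max (\<psi>*z) (-\<mu>) = -\<mu>"
proof -
  have "\<psi>*z \<le> \<psi>*ps" using assms(1,3) by (intro mult_left_mono) auto
  then show ?thesis using assms(2) by simp
qed

lemma fR: fixes \<psi> ps \<mu> z f G \<sigma> :: real assumes "\<psi> > 0" "\<psi>*ps = -\<mu>" "ps \<le> z" shows "max (\<psi>*z) (-\<mu>) = \<psi>*z"
proof -
  have "\<psi>*ps \<le> \<psi>*z" using assms(1,3) by (intro mult_left_mono) auto
  then show ?thesis using assms(2) by simp
qed

lemma gL: fixes \<psi> ps \<mu> z f G \<sigma> :: real assumes "f = -\<mu>" "G = \<sigma>*(\<psi>*ps - ps)" "\<psi>*ps = -\<mu>"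
  shows "\<sigma>*(f - z) - G = \<sigma>*(ps-z)"
  using assms by (simp add: algebra_simps)

lemma gR: fixes \<psi> ps \<mu> z f G \<sigma> :: real assumes "f = \<psi>*z" "G = \<sigma>*(\<psi>*ps - ps)"
  shows "\<sigma>*(f - z) - G = \<sigma>*(\<psi>-1)*(z-ps)"
  using assms by (simp add: algebra_simps)

lemma necessity:
  fixes \<sigma> \<mu> \<psi> w \<kappa> \<kappa>0 e1 e2 \<pi>1 \<pi>2 :: real
  assumes s: "\<sigma> > 0" and mu: "\<mu> > 0" and psi: "\<psi> > 1" and w0: "0 \<le> w" and w1: "w < 1"
    and k0: "\<kappa>0 > 0" and kl: "-\<sigma> < \<kappa>" and kk: "\<kappa> \<le> \<kappa>0"
    and mean: "\<sigma>*(w*(max (\<psi>*\<pi>2) (-\<mu>) - \<pi>2) + (1-w)*(max (\<psi>*\<pi>1) (-\<mu>) - \<pi>1)) = w*e2 + (1-w)*e1"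
    and diff: "\<kappa>*(\<pi>1-\<pi>2) + \<sigma>*(max (\<psi>*\<pi>1) (-\<mu>) - max (\<psi>*\<pi>2) (-\<mu>)) = e1 - e2"
  shows "(e2-e1)*(mm \<sigma> \<psi> w \<kappa>0 + 1 - w) \<le> e2 - gst \<sigma> \<mu> \<psi>"
proof -
  define ps where "ps = -\<mu>/\<psi>"
  define m0 where "m0 = mm \<sigma> \<psi> w \<kappa>0"
  define t where "t = e2 - e1"
  define f1 where "f1 = max (\<psi>*\<pi>1) (-\<mu>)"
  define f2 where "f2 = max (\<psi>*\<pi>2) (-\<mu>)"
  define G where "G = gst \<sigma> \<mu> \<psi>"
  have psi0: "\<psi> > 0" using psi by simp
  have pps: "\<psi>*ps = -\<mu>" using psi by (simp add: ps_def)
  have gs: "G = \<sigma>*(\<psi>*ps - ps)" unfolding G_def gst_def ps_def using psi by (simp add: field_simps)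
  have M: "m0 \<ge> 0" "m0*\<kappa>0 \<le> (1-w)*\<sigma>" "m0*(\<kappa>0+\<sigma>*\<psi>) \<le> w*\<sigma>*(\<psi>-1)" "m0 \<le> w"
    using mm_facts[OF s psi w0 w1 k0] by (auto simp: m0_def)
  define g1 where "g1 = \<sigma>*(f1 - \<pi>1) - G"
  define g2 where "g2 = \<sigma>*(f2 - \<pi>2) - G"
  have L1: "\<pi>1 \<le> ps \<Longrightarrow> f1 = -\<mu> \<and> g1 = \<sigma>*(ps-\<pi>1)"
    using fL[OF psi0 pps] gL[OF _ gs pps] unfolding f1_def g1_def by blast
  have R1: "ps \<le> \<pi>1 \<Longrightarrow> f1 = \<psi>*\<pi>1 \<and> g1 = \<sigma>*(\<psi>-1)*(\<pi>1-ps)"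
    using fR[OF psi0 pps] gR[OF _ gs] unfolding f1_def g1_def by blast
  have L2: "\<pi>2 \<le> ps \<Longrightarrow> f2 = -\<mu> \<and> g2 = \<sigma>*(ps-\<pi>2)"
    using fL[OF psi0 pps] gL[OF _ gs pps] unfolding f2_def g2_def by blast
  have R2: "ps \<le> \<pi>2 \<Longrightarrow> f2 = \<psi>*\<pi>2 \<and> g2 = \<sigma>*(\<psi>-1)*(\<pi>2-ps)"
    using fR[OF psi0 pps] gR[OF _ gs] unfolding f2_def g2_def by blast
  have g1n: "g1 \<ge> 0"
  proof (cases "\<pi>1 \<le> ps")
    case True then show ?thesis using L1 s by simp
  next
    case False then show ?thesis using R1 s psi by simp
  qed
  have g2n: "g2 \<ge> 0"
  proof (cases "\<pi>2 \<le> ps")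
    case True then show ?thesis using L2 s by simp
  next
    case False then show ?thesis using R2 s psi by simp
  qed
  have A: "w*g2 + (1-w)*g1 = e2 - (1-w)*t - G"
    using mean unfolding g1_def g2_def f1_def[symmetric] f2_def[symmetric] t_def
    by (simp add: algebra_simps)
  have key: "t*m0 \<le> w*g2 + (1-w)*g1"
  proof (cases "t \<le> 0")
    case True
    then have "t*m0 \<le> 0" using M by (simp add: mult_nonpos_nonneg)
    moreover have "w*g2 + (1-w)*g1 \<ge> 0" using g1n g2n w0 w1 by simp
    ultimately show ?thesis by linarith
  next
    case False
    have td: "t = \<kappa>*(\<pi>2-\<pi>1) + \<sigma>*(f2-f1)" using diff unfolding t_def f1_def f2_def by (simp add: algebra_simps)
    show ?thesis
    proof (cases "\<pi>2 \<ge> \<pi>1")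
      case True
      define t0 where "t0 = \<kappa>0*(\<pi>2-\<pi>1) + \<sigma>*(f2-f1)"
      have "(\<kappa>0-\<kappa>)*(\<pi>2-\<pi>1) \<ge> 0" using True kk by simp
      then have tt0: "t \<le> t0" unfolding td t0_def by (simp add: algebra_simps)
      have "t0*m0 \<le> w*g2 + (1-w)*g1"
      proof -
        consider "\<pi>2 \<le> ps" | "\<pi>1 \<ge> ps" | "\<pi>1 \<le> ps" "ps \<le> \<pi>2" by linarith
        then show ?thesis
        proof cases
          case 1
          then have "\<pi>1 \<le> ps" using True by linarith
          then have ff: "f1 = -\<mu>" "f2 = -\<mu>" "g1 = \<sigma>*(ps-\<pi>1)" "g2 = \<sigma>*(ps-\<pi>2)"
            using 1 L1 L2 by auto
          have "t0*m0 = (m0*\<kappa>0)*(\<pi>2-\<pi>1)" unfolding t0_def ff by (simp add: algebra_simps)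
          also have "\<dots> \<le> ((1-w)*\<sigma>)*(\<pi>2-\<pi>1)" using M True by (intro mult_right_mono) auto
          also have "\<dots> \<le> w*g2 + (1-w)*g1"
          proof -
            have "w*g2 + (1-w)*g1 - ((1-w)*\<sigma>)*(\<pi>2-\<pi>1) = w*(\<sigma>*(ps-\<pi>2)) + (1-w)*(\<sigma>*(ps-\<pi>2))"
              unfolding ff by (simp add: algebra_simps)
            moreover have "w*(\<sigma>*(ps-\<pi>2)) \<ge> 0" "(1-w)*(\<sigma>*(ps-\<pi>2)) \<ge> 0" using 1 w0 w1 s by auto
            ultimately show ?thesis by linarith
          qed
          finally show ?thesis .
        next
          case 2
          then have "\<pi>2 \<ge> ps" using True by linarith
          then have ff: "f1 = \<psi>*\<pi>1" "f2 = \<psi>*\<pi>2" "g1 = \<sigma>*(\<psi>-1)*(\<pi>1-ps)" "g2 = \<sigma>*(\<psi>-1)*(\<pi>2-ps)"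
            using 2 R1 R2 by auto
          have "t0*m0 = (m0*(\<kappa>0+\<sigma>*\<psi>))*(\<pi>2-\<pi>1)" unfolding t0_def ff by (simp add: algebra_simps)
          also have "\<dots> \<le> (w*\<sigma>*(\<psi>-1))*(\<pi>2-\<pi>1)" using M True by (intro mult_right_mono) auto
          also have "\<dots> \<le> w*g2 + (1-w)*g1"
          proof -
            have "w*g2 + (1-w)*g1 - (w*\<sigma>*(\<psi>-1))*(\<pi>2-\<pi>1) = w*(\<sigma>*(\<psi>-1)*(\<pi>1-ps)) + (1-w)*(\<sigma>*(\<psi>-1)*(\<pi>1-ps))"
              unfolding ff by (simp add: algebra_simps)
            moreover have "w*(\<sigma>*(\<psi>-1)*(\<pi>1-ps)) \<ge> 0" "(1-w)*(\<sigma>*(\<psi>-1)*(\<pi>1-ps)) \<ge> 0" using 2 w0 w1 s psi by auto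
            ultimately show ?thesis by linarith
          qed
          finally show ?thesis .
        next
          case 3
          then have ff: "f1 = -\<mu>" "f2 = \<psi>*\<pi>2" "g1 = \<sigma>*(ps-\<pi>1)" "g2 = \<sigma>*(\<psi>-1)*(\<pi>2-ps)"
            using L1 R2 by auto
          have e: "f2 - f1 = \<psi>*(\<pi>2-ps)" unfolding ff using pps by (simp add: algebra_simps)
          have "t0*m0 = (m0*\<kappa>0)*(ps-\<pi>1) + (m0*(\<kappa>0+\<sigma>*\<psi>))*(\<pi>2-ps)"
            unfolding t0_def e by (simp add: algebra_simps)
          also have "\<dots> \<le> ((1-w)*\<sigma>)*(ps-\<pi>1) + (w*\<sigma>*(\<psi>-1))*(\<pi>2-ps)"
            using M 3 by (intro add_mono mult_right_mono) auto
          also have "\<dots> = w*g2 + (1-w)*g1" unfolding ff by (simp add: algebra_simps)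
          finally show ?thesis .
        qed
      qed
      moreover have "t*m0 \<le> t0*m0" using tt0 M by (simp add: mult_right_mono)
      ultimately show ?thesis by linarith
    next
      case lt: False
      have p2: "\<pi>2 \<le> ps"
      proof (rule ccontr)
        assume "\<not> \<pi>2 \<le> ps"
        then have "f1 = \<psi>*\<pi>1" "f2 = \<psi>*\<pi>2" using R1 R2 lt by auto
        then have "t = (\<kappa>+\<sigma>*\<psi>)*(\<pi>2-\<pi>1)" using td by (simp add: algebra_simps)
        moreover have "\<kappa>+\<sigma>*\<psi> > 0"
        proof -
          have "\<sigma>*1 < \<sigma>*\<psi>" using s psi by (simp only: mult_less_cancel_left_pos)
          then show ?thesis using kl by simp
        qed
        ultimately have "t < 0" using lt by (simp add: mult_pos_neg)
        then show False using False by simp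
      qed
      have tb: "t \<le> \<sigma>*(ps-\<pi>2)"
      proof -
        have k1: "\<kappa>*(\<pi>2-\<pi>1) \<le> \<sigma>*(\<pi>1-\<pi>2)"
        proof -
          have "(\<kappa>+\<sigma>)*(\<pi>2-\<pi>1) \<le> 0" using kl lt by (simp add: mult_pos_neg less_imp_le)
          then show ?thesis by (simp add: algebra_simps)
        qed
        have f2e: "f2 = -\<mu>" using L2 p2 by auto
        show ?thesis
        proof (cases "\<pi>1 \<le> ps")
          case True
          then have "f1 = -\<mu>" using L1 by auto
          then have "t = \<kappa>*(\<pi>2-\<pi>1)" using td f2e by simp
          moreover have "\<sigma>*(\<pi>1-\<pi>2) \<le> \<sigma>*(ps-\<pi>2)" using True s by simp
          ultimately show ?thesis using k1 by linarith
        next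
          case nf: False
          then have "f1 = \<psi>*\<pi>1" using R1 by auto
          then have "f2 - f1 = -(\<psi>*(\<pi>1 - ps))" using f2e pps by (simp add: algebra_simps)
          then have "t = \<kappa>*(\<pi>2-\<pi>1) - \<sigma>*(\<psi>*(\<pi>1 - ps))" using td by simp
          moreover have "\<sigma>*(\<psi>*(\<pi>1 - ps)) \<ge> \<sigma>*(\<pi>1-ps)" using nf psi s by simp
          moreover have "\<sigma>*(\<pi>1-\<pi>2) - \<sigma>*(\<pi>1-ps) = \<sigma>*(ps-\<pi>2)" by (simp add: algebra_simps)
          ultimately show ?thesis using k1 by linarith
        qed
      qed
      have "t*m0 \<le> t*w" using M False by (simp add: mult_left_mono)
      also have "\<dots> \<le> (\<sigma>*(ps-\<pi>2))*w" using tb w0 by (simp add: mult_right_mono)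
      also have "\<dots> = w*g2" using L2 p2 by auto
      also have "\<dots> \<le> w*g2 + (1-w)*g1" using g1n w1 by simp
      finally show ?thesis .
    qed
  qed
  show ?thesis using key A unfolding m0_def[symmetric] t_def[symmetric] G_def[symmetric] by (simp add: algebra_simps)
qed



lemma H_cases:
  fixes \<kappa> \<sigma> \<psi> \<mu> u :: real
  assumes k: "\<kappa> > 0" and s: "\<sigma> > 0" and psi: "\<psi> > 1" and mu: "\<mu> > 0"
  shows "\<psi>*u + (\<kappa>+\<sigma>*\<psi>)*\<mu> \<ge> 0 \<Longrightarrow> min (u/(\<kappa>+\<sigma>*\<psi>)) ((u+\<sigma>*\<mu>)/\<kappa>) = u/(\<kappa>+\<sigma>*\<psi>)
           \<and> max (\<psi>*(u/(\<kappa>+\<sigma>*\<psi>))) (-\<mu>) = \<psi>*(u/(\<kappa>+\<sigma>*\<psi>))"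
    and "\<psi>*u + (\<kappa>+\<sigma>*\<psi>)*\<mu> \<le> 0 \<Longrightarrow> min (u/(\<kappa>+\<sigma>*\<psi>)) ((u+\<sigma>*\<mu>)/\<kappa>) = (u+\<sigma>*\<mu>)/\<kappa>
           \<and> max (\<psi>*((u+\<sigma>*\<mu>)/\<kappa>)) (-\<mu>) = -\<mu>"
proof -
  define K where "K = \<kappa>+\<sigma>*\<psi>"
  have sp: "\<sigma>*\<psi> > 0" using s psi by simp
  have K: "K > 0" using k sp unfolding K_def by linarith
  have d1: "(u+\<sigma>*\<mu>)/\<kappa> - u/K = \<sigma>*(\<psi>*u + K*\<mu>)/(\<kappa>*K)"
    using k K unfolding K_def by (simp add: field_simps)
  have d2: "\<psi>*(u/K) + \<mu> = (\<psi>*u + K*\<mu>)/K" using K by (simp add: field_simps)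
  have d3: "\<psi>*((u+\<sigma>*\<mu>)/\<kappa>) + \<mu> = (\<psi>*u + K*\<mu>)/\<kappa>"
    using k unfolding K_def by (simp add: field_simps)
  show "\<psi>*u + (\<kappa>+\<sigma>*\<psi>)*\<mu> \<ge> 0 \<Longrightarrow> min (u/(\<kappa>+\<sigma>*\<psi>)) ((u+\<sigma>*\<mu>)/\<kappa>) = u/(\<kappa>+\<sigma>*\<psi>)
           \<and> max (\<psi>*(u/(\<kappa>+\<sigma>*\<psi>))) (-\<mu>) = \<psi>*(u/(\<kappa>+\<sigma>*\<psi>))"
  proof -
    assume a: "\<psi>*u + (\<kappa>+\<sigma>*\<psi>)*\<mu> \<ge> 0"
    then have "\<sigma>*(\<psi>*u + K*\<mu>)/(\<kappa>*K) \<ge> 0" using s k K unfolding K_def by simp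
    then have "u/K \<le> (u+\<sigma>*\<mu>)/\<kappa>" using d1 by linarith
    moreover have "(\<psi>*u + K*\<mu>)/K \<ge> 0" using a K unfolding K_def by simp
    then have "\<psi>*(u/K) \<ge> -\<mu>" using d2 by linarith
    ultimately show ?thesis unfolding K_def by simp
  qed
  show "\<psi>*u + (\<kappa>+\<sigma>*\<psi>)*\<mu> \<le> 0 \<Longrightarrow> min (u/(\<kappa>+\<sigma>*\<psi>)) ((u+\<sigma>*\<mu>)/\<kappa>) = (u+\<sigma>*\<mu>)/\<kappa>
           \<and> max (\<psi>*((u+\<sigma>*\<mu>)/\<kappa>)) (-\<mu>) = -\<mu>"
  proof -
    assume a: "\<psi>*u + (\<kappa>+\<sigma>*\<psi>)*\<mu> \<le> 0"
    then have "\<sigma>*(\<psi>*u + K*\<mu>)/(\<kappa>*K) \<le> 0" using s k K unfolding K_def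
      by (simp add: divide_nonpos_pos mult_nonneg_nonpos)
    then have "u/K \<ge> (u+\<sigma>*\<mu>)/\<kappa>" using d1 by linarith
    moreover have "(\<psi>*u + K*\<mu>)/\<kappa> \<le> 0" using a k unfolding K_def by (simp add: divide_nonpos_pos)
    then have "\<psi>*((u+\<sigma>*\<mu>)/\<kappa>) \<le> -\<mu>" using d3 by linarith
    ultimately show ?thesis unfolding K_def by simp
  qed
qed

lemma H_inv:
  fixes \<kappa> \<sigma> \<psi> \<mu> u :: real
  assumes k: "\<kappa> > 0" and s: "\<sigma> > 0" and psi: "\<psi> > 1" and mu: "\<mu> > 0"
  shows "\<kappa>*min (u/(\<kappa>+\<sigma>*\<psi>)) ((u+\<sigma>*\<mu>)/\<kappa>) + \<sigma>*max (\<psi>*min (u/(\<kappa>+\<sigma>*\<psi>)) ((u+\<sigma>*\<mu>)/\<kappa>)) (-\<mu>) = u"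
proof -
  have K: "\<kappa>+\<sigma>*\<psi> > 0" using k s psi by (simp add: add_pos_pos)
  show ?thesis
  proof (cases "\<psi>*u + (\<kappa>+\<sigma>*\<psi>)*\<mu> \<ge> 0")
    case True
    note h = H_cases(1)[OF k s psi mu True]
    have "(\<kappa>+\<sigma>*\<psi>)*(u/(\<kappa>+\<sigma>*\<psi>)) = u" using K by simp
    then have "\<kappa>*(u/(\<kappa>+\<sigma>*\<psi>)) + \<sigma>*(\<psi>*(u/(\<kappa>+\<sigma>*\<psi>))) = u" by (metis distrib_right mult.assoc)
    then show ?thesis using h by simp
  next
    case False
    note h = H_cases(2)[OF k s psi mu] 
    have "\<kappa>*((u+\<sigma>*\<mu>)/\<kappa>) + \<sigma>*(-\<mu>) = u" using k by (simp add: field_simps)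
    then show ?thesis using h False by simp
  qed
qed



lemma sufficiency:
  fixes \<sigma> \<mu> \<psi> w \<kappa> e1 e2 :: real
  assumes s: "\<sigma> > 0" and mu: "\<mu> > 0" and psi: "\<psi> > 1" and w0: "0 \<le> w" and w1: "w < 1"
    and k: "\<kappa> > 0" and e2: "e2 \<ge> 0"
    and C: "(e2-e1)*(mm \<sigma> \<psi> w \<kappa> + 1 - w) \<le> e2 - gst \<sigma> \<mu> \<psi>"
  shows "\<exists>\<pi>1 \<pi>2. \<sigma>*(w*(max (\<psi>*\<pi>2) (-\<mu>) - \<pi>2) + (1-w)*(max (\<psi>*\<pi>1) (-\<mu>) - \<pi>1)) = w*e2 + (1-w)*e1
      \<and> \<kappa>*(\<pi>1-\<pi>2) + \<sigma>*(max (\<psi>*\<pi>1) (-\<mu>) - max (\<psi>*\<pi>2) (-\<mu>)) = e1 - e2"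
proof -
  define K where "K = \<kappa>+\<sigma>*\<psi>"
  have sp: "\<sigma>*\<psi> > 0" using s psi by simp
  have K: "K > 0" using k sp unfolding K_def by linarith
  define H where "H = (\<lambda>u. min (u/K) ((u+\<sigma>*\<mu>)/\<kappa>))"
  define F where "F = (\<lambda>z. max (\<psi>*z) (-\<mu>))"
  define g where "g = (\<lambda>u. \<sigma>*(F (H u) - H u))"
  define \<Phi> where "\<Phi> = (\<lambda>c. w*g(c+e2) + (1-w)*g(c+e1) - (w*e2 + (1-w)*e1))"
  define G where "G = gst \<sigma> \<mu> \<psi>"
  define ps where "ps = -\<mu>/\<psi>"
  define us where "us = K*ps"
  have pps: "\<psi>*ps = -\<mu>" using psi by (simp add: ps_def)
  have Gps: "G = \<sigma>*(\<psi>-1)*ps" unfolding G_def gst_def ps_def using psi by (simp add: field_simps)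
  have Gneg: "G \<le> 0"
  proof -
    have "ps < 0" unfolding ps_def using mu psi by simp
    moreover have "\<sigma>*(\<psi>-1) > 0" using s psi by simp
    ultimately show ?thesis unfolding Gps by (simp add: mult_pos_neg less_imp_le)
  qed
  have cont: "continuous_on UNIV \<Phi>"
    unfolding \<Phi>_def g_def F_def H_def using K k by (auto intro!: continuous_intros)
  have gR: "g (us + v) = G + \<sigma>*(\<psi>-1)*v/K" if v: "v \<ge> 0" for v
  proof -
    have "\<psi>*(us+v) + (\<kappa>+\<sigma>*\<psi>)*\<mu> \<ge> 0"
    proof -
      have "\<psi>*(us+v) + (\<kappa>+\<sigma>*\<psi>)*\<mu> = K*(\<psi>*ps + \<mu>) + \<psi>*v" unfolding us_def K_def
        by (simp add: algebra_simps)
      then have "\<psi>*(us+v) + (\<kappa>+\<sigma>*\<psi>)*\<mu> = \<psi>*v" using pps by simp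
      then show ?thesis using v psi by simp
    qed
    note h = H_cases(1)[OF k s psi mu this]
    have hv: "H (us+v) = ps + v/K" unfolding H_def using h K unfolding K_def us_def by (simp add: field_simps)
    have fv: "F (H (us+v)) = \<psi>*H (us+v)" unfolding F_def H_def using h unfolding K_def by simp
    have "g (us+v) = \<sigma>*(\<psi>*H (us+v) - H (us+v))" unfolding g_def fv by simp
    then show ?thesis unfolding hv Gps by (simp add: algebra_simps add_divide_distrib diff_divide_distrib)
  qed
  have gL: "g (us + v) = G - \<sigma>*v/\<kappa>" if v: "v \<le> 0" for v
  proof -
    have "\<psi>*(us+v) + (\<kappa>+\<sigma>*\<psi>)*\<mu> \<le> 0"
    proof -
      have "\<psi>*(us+v) + (\<kappa>+\<sigma>*\<psi>)*\<mu> = K*(\<psi>*ps + \<mu>) + \<psi>*v" unfolding us_def K_def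
        by (simp add: algebra_simps)
      then have "\<psi>*(us+v) + (\<kappa>+\<sigma>*\<psi>)*\<mu> = \<psi>*v" using pps by simp
      then show ?thesis using v psi by (simp add: mult_pos_neg less_imp_le mult_nonneg_nonpos)
    qed
    note h = H_cases(2)[OF k s psi mu this]
    have "us + v + \<sigma>*\<mu> = \<kappa>*ps + v + \<sigma>*(\<psi>*ps + \<mu>)" unfolding us_def K_def by (simp add: algebra_simps)
    then have "us + v + \<sigma>*\<mu> = \<kappa>*ps + v" using pps by simp
    then have hv: "H (us+v) = ps + v/\<kappa>" unfolding H_def using h k unfolding K_def by (simp add: field_simps)
    have fv: "F (H (us+v)) = -\<mu>" unfolding F_def H_def using h unfolding K_def by simp
    have Gps2: "G = \<sigma>*(-\<mu> - ps)" unfolding Gps pps[symmetric] by (simp add: algebra_simps)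
    have "g (us+v) = \<sigma>*(-\<mu> - H (us+v))" unfolding g_def fv by simp
    then show ?thesis unfolding hv Gps2 using k by (simp add: field_simps)
  qed
  have g0: "g us = G" using gR[of 0] by simp
  define m where "m = mm \<sigma> \<psi> w \<kappa>"
  have R1: "\<sigma>*(\<psi>-1)/K \<le> 1" using K s unfolding K_def using k by (simp add: divide_le_eq algebra_simps)
  obtain c0 where c0: "\<Phi> c0 \<le> 0"
  proof (cases "e1 \<ge> e2")
    case True
    define d where "d = e1 - e2"
    have d: "d \<ge> 0" using True d_def by simp
    have "\<Phi> (us - e2) = w*g us + (1-w)*g (us + d) - (w*e2 + (1-w)*e1)"
      unfolding \<Phi>_def d_def by (simp add: algebra_simps)
    also have "\<dots> = w*G + (1-w)*(G + \<sigma>*(\<psi>-1)*d/K) - (w*e2 + (1-w)*e1)"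
      using g0 gR[OF d] by simp
    also have "\<dots> = G + (1-w)*(\<sigma>*(\<psi>-1)*d/K) - e2 - (1-w)*d"
      unfolding d_def by (simp add: algebra_simps)
    finally have "\<Phi> (us - e2) = G + (1-w)*(\<sigma>*(\<psi>-1)*d/K) - e2 - (1-w)*d" .
    moreover have "(1-w)*(\<sigma>*(\<psi>-1)*d/K) \<le> (1-w)*d"
    proof -
      have "\<sigma>*(\<psi>-1)*d/K = (\<sigma>*(\<psi>-1)/K)*d" by simp
      also have "\<dots> \<le> 1*d" using R1 d by (intro mult_right_mono) auto
      finally show ?thesis using w1 by (intro mult_left_mono) auto
    qed
    ultimately have "\<Phi> (us - e2) \<le> 0" using Gneg e2 by linarith
    then show ?thesis by (rule that)
  next
    case False
    define t where "t = e2 - e1"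
    have t: "t > 0" using False t_def by simp
    show ?thesis
    proof (cases "(1-w)*\<sigma>/\<kappa> \<le> w*\<sigma>*(\<psi>-1)/(\<kappa>+\<sigma>*\<psi>)")
      case True
      then have mv: "m = (1-w)*\<sigma>/\<kappa>" unfolding m_def mm_def by simp
      have "\<Phi> (us - e2) = w*g us + (1-w)*g (us + -t) - (w*e2 + (1-w)*e1)"
        unfolding \<Phi>_def t_def by (simp add: algebra_simps)
      also have "\<dots> = w*G + (1-w)*(G + \<sigma>*t/\<kappa>) - (w*e2 + (1-w)*e1)"
        using g0 gL[of "-t"] t by simp
      also have "\<dots> = G + (1-w)*(\<sigma>*t/\<kappa>) - e2 + (1-w)*t"
        unfolding t_def by (simp add: algebra_simps)
      also have "\<dots> = G + t*(m + 1 - w) - e2" unfolding mv by (simp add: algebra_simps)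
      finally have "\<Phi> (us - e2) \<le> 0" using C unfolding m_def[symmetric] G_def[symmetric] t_def by linarith
      then show ?thesis by (rule that)
    next
      case False
      then have mv: "m = w*\<sigma>*(\<psi>-1)/K" unfolding m_def mm_def K_def by simp
      have "\<Phi> (us - e1) = w*g (us + t) + (1-w)*g us - (w*e2 + (1-w)*e1)"
        unfolding \<Phi>_def t_def by (simp add: algebra_simps)
      also have "\<dots> = w*(G + \<sigma>*(\<psi>-1)*t/K) + (1-w)*G - (w*e2 + (1-w)*e1)"
        using g0 gR[of t] t by simp
      also have "\<dots> = G + w*(\<sigma>*(\<psi>-1)*t/K) - e2 + (1-w)*t"
        unfolding t_def by (simp add: algebra_simps)
      also have "\<dots> = G + t*(m + 1 - w) - e2" unfolding mv by (simp add: algebra_simps)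
      finally have "\<Phi> (us - e1) \<le> 0" using C unfolding m_def[symmetric] G_def[symmetric] t_def by linarith
      then show ?thesis by (rule that)
    qed
  qed
  define Ee where "Ee = w*e2 + (1-w)*e1"
  have sp1: "\<sigma>*(\<psi>-1) > 0" using s psi by simp
  define M where "M = \<bar>Ee\<bar>/(\<sigma>*(\<psi>-1))"
  have M0: "M \<ge> 0" unfolding M_def using sp1 by simp
  have ne: "\<sigma>*(\<psi>-1) \<noteq> 0" using s psi by simp
  have SM: "\<sigma>*(\<psi>-1)*M = \<bar>Ee\<bar>" unfolding M_def times_divide_eq_right using nonzero_mult_div_cancel_left[OF ne] by blast
  have glow: "g u \<ge> \<sigma>*(\<psi>-1)*M" if u: "u \<ge> K*M" for u
  proof -
    have a: "u/K \<ge> M" using u K by (simp add: pos_le_divide_eq mult.commute)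
    have "\<sigma>*\<psi>*M \<ge> 0" using sp M0 by simp
    moreover have "K*M = \<kappa>*M + \<sigma>*\<psi>*M" unfolding K_def by (simp add: algebra_simps)
    moreover have "\<sigma>*\<mu> > 0" using s mu by simp
    ultimately have "u + \<sigma>*\<mu> \<ge> \<kappa>*M" using u by linarith
    then have b: "(u+\<sigma>*\<mu>)/\<kappa> \<ge> M" using k by (simp add: pos_le_divide_eq mult.commute)
    have HM: "H u \<ge> M" unfolding H_def using a b by simp
    have "F (H u) \<ge> \<psi>*H u" unfolding F_def by simp
    then have gg: "g u \<ge> \<sigma>*(\<psi>*H u - H u)" unfolding g_def using s by simp
    have "\<sigma>*(\<psi>-1)*M \<le> \<sigma>*(\<psi>-1)*H u" using HM sp1 by (simp add: mult_left_mono)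
    also have "\<dots> = \<sigma>*(\<psi>*H u - H u)" by (simp add: algebra_simps)
    also have "\<dots> \<le> g u" using gg by simp
    finally show ?thesis .
  qed
  define c1 where "c1 = max c0 (K*M + \<bar>e1\<bar> + \<bar>e2\<bar>)"
  have "c1 + e1 \<ge> K*M" "c1 + e2 \<ge> K*M" unfolding c1_def by auto
  then have "g (c1+e1) \<ge> \<sigma>*(\<psi>-1)*M" "g (c1+e2) \<ge> \<sigma>*(\<psi>-1)*M" using glow by auto
  then have "w*g(c1+e2) + (1-w)*g(c1+e1) \<ge> w*(\<sigma>*(\<psi>-1)*M) + (1-w)*(\<sigma>*(\<psi>-1)*M)"
    using w0 w1 by (intro add_mono mult_left_mono) auto
  then have c1: "\<Phi> c1 \<ge> 0" unfolding \<Phi>_def Ee_def[symmetric] using SM by (simp add: algebra_simps)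
  have "c0 \<le> c1" unfolding c1_def by simp
  then obtain c where c: "\<Phi> c = 0" using IVT'[of \<Phi> c0 0 c1] c0 c1 continuous_on_subset[OF cont] by auto
  define \<pi>1 where "\<pi>1 = H (c+e1)"
  define \<pi>2 where "\<pi>2 = H (c+e2)"
  have i1: "\<kappa>*\<pi>1 + \<sigma>*F \<pi>1 = c + e1" unfolding \<pi>1_def H_def F_def K_def using H_inv[OF k s psi mu] by simp
  have i2: "\<kappa>*\<pi>2 + \<sigma>*F \<pi>2 = c + e2" unfolding \<pi>2_def H_def F_def K_def using H_inv[OF k s psi mu] by simp
  have "\<sigma>*(w*(F \<pi>2 - \<pi>2) + (1-w)*(F \<pi>1 - \<pi>1)) = w*e2 + (1-w)*e1"
    using c unfolding \<Phi>_def g_def \<pi>1_def[symmetric] \<pi>2_def[symmetric] by (simp add: algebra_simps)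
  moreover have "\<kappa>*(\<pi>1-\<pi>2) + \<sigma>*(F \<pi>1 - F \<pi>2) = e1 - e2" using i1 i2 by (simp add: algebra_simps)
  ultimately show ?thesis unfolding F_def by blast
qed



lemma rpe_ident:
  fixes la \<beta> \<sigma> w x1 x2 \<pi>1 \<pi>2 i1 i2 e1 e2 P X :: real
  assumes la: "la \<noteq> 0" and x1: "x1 = (\<pi>1 - \<beta>*P)/la" and x2: "x2 = (\<pi>2 - \<beta>*P)/la"
    and P: "P = w*\<pi>2 + (1-w)*\<pi>1" and X: "X = w*x2 + (1-w)*x1"
  shows "x1 - (X - \<sigma>*(i1 - P) + e1) = w*((1/la)*(\<pi>1-\<pi>2) + \<sigma>*(i1 - i2) - (e1 - e2))
           + (\<sigma>*(w*(i2-\<pi>2) + (1-w)*(i1-\<pi>1)) - (w*e2 + (1-w)*e1))"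
    and "x2 - (X - \<sigma>*(i2 - P) + e2) = -(1-w)*((1/la)*(\<pi>1-\<pi>2) + \<sigma>*(i1 - i2) - (e1 - e2))
           + (\<sigma>*(w*(i2-\<pi>2) + (1-w)*(i1-\<pi>1)) - (w*e2 + (1-w)*e1))"
  using la unfolding X x1 x2 P by (simp_all add: field_simps)

lemma ree_ident0:
  fixes la \<beta> \<sigma> w p q x1 x2 \<pi>1 \<pi>2 i1 i2 e1 e2 :: real
  assumes w: "w*(2-p-q) = 1-p"
    and x1: "x1*la = \<pi>1 - \<beta>*(p*\<pi>1 + (1-p)*\<pi>2)" and x2: "x2*la = \<pi>2 - \<beta>*((1-q)*\<pi>1 + q*\<pi>2)"
  shows "la*(x1 - ((p*x1 + (1-p)*x2) - \<sigma>*(i1 - (p*\<pi>1 + (1-p)*\<pi>2)) + e1)) =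
          w*(((1-(p+q-1))*(1-\<beta>*(p+q-1)) - la*\<sigma>*(p+q-1))*(\<pi>1-\<pi>2) + la*\<sigma>*(i1 - i2) - la*(e1 - e2))
           + la*(\<sigma>*(w*(i2-\<pi>2) + (1-w)*(i1-\<pi>1)) - (w*e2 + (1-w)*e1))"
    and "la*(x2 - (((1-q)*x1 + q*x2) - \<sigma>*(i2 - ((1-q)*\<pi>1 + q*\<pi>2)) + e2)) =
          -(1-w)*(((1-(p+q-1))*(1-\<beta>*(p+q-1)) - la*\<sigma>*(p+q-1))*(\<pi>1-\<pi>2) + la*\<sigma>*(i1 - i2) - la*(e1 - e2))
           + la*(\<sigma>*(w*(i2-\<pi>2) + (1-w)*(i1-\<pi>1)) - (w*e2 + (1-w)*e1))"
  using w x1 x2 by algebra+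



definition Sol :: "real \<Rightarrow> real \<Rightarrow> real \<Rightarrow> real \<Rightarrow> real \<Rightarrow> real \<Rightarrow> real \<Rightarrow> bool" where
  "Sol \<sigma> \<mu> \<psi> w \<kappa> e1 e2 \<longleftrightarrow> (\<exists>\<pi>1 \<pi>2.
     \<sigma>*(w*(max (\<psi>*\<pi>2) (-\<mu>) - \<pi>2) + (1-w)*(max (\<psi>*\<pi>1) (-\<mu>) - \<pi>1)) = w*e2 + (1-w)*e1
   \<and> \<kappa>*(\<pi>1-\<pi>2) + \<sigma>*(max (\<psi>*\<pi>1) (-\<mu>) - max (\<psi>*\<pi>2) (-\<mu>)) = e1 - e2)"

lemma euler_RPE_iff:
  fixes \<beta> la \<sigma> \<mu> \<psi> p q e1 e2 :: real
  assumes la: "la > 0"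
  shows "euler_RPE_exists \<beta> la \<sigma> \<mu> \<psi> p q e1 e2 \<longleftrightarrow> Sol \<sigma> \<mu> \<psi> (qbar p q) (1/la) e1 e2"
proof -
  define w where "w = qbar p q"
  have E: "\<And>a b. Eavg p q a b = w*b + (1-w)*a" by (simp add: Eavg_def w_def)
  have la0: "la \<noteq> 0" using la by simp
  show ?thesis
  proof
    assume "euler_RPE_exists \<beta> la \<sigma> \<mu> \<psi> p q e1 e2"
    then obtain x1 \<pi>1 x2 \<pi>2 where h: "euler_solves \<beta> la \<sigma> \<mu> \<psi> e1 e2 x1 \<pi>1 x2 \<pi>2
          (w*x2 + (1-w)*x1) (w*\<pi>2 + (1-w)*\<pi>1) (w*x2 + (1-w)*x1) (w*\<pi>2 + (1-w)*\<pi>1)"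
      unfolding euler_RPE_exists_def E by blast
    define P where "P = w*\<pi>2 + (1-w)*\<pi>1"
    define X where "X = w*x2 + (1-w)*x1"
    define i1 where "i1 = max (\<psi>*\<pi>1) (-\<mu>)"
    define i2 where "i2 = max (\<psi>*\<pi>2) (-\<mu>)"
    have h1: "x1 = X - \<sigma>*(i1 - P) + e1" and h2: "\<pi>1 = la*x1 + \<beta>*P"
      and h3: "x2 = X - \<sigma>*(i2 - P) + e2" and h4: "\<pi>2 = la*x2 + \<beta>*P"
      using h unfolding euler_solves_def P_def[symmetric] X_def[symmetric] i1_def[symmetric] i2_def[symmetric] by auto
    have x1: "x1 = (\<pi>1 - \<beta>*P)/la" using h2 la0 by (simp add: field_simps)
    have x2: "x2 = (\<pi>2 - \<beta>*P)/la" using h4 la0 by (simp add: field_simps)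
    define D where "D = (1/la)*(\<pi>1-\<pi>2) + \<sigma>*(i1 - i2) - (e1 - e2)"
    define Mn where "Mn = \<sigma>*(w*(i2-\<pi>2) + (1-w)*(i1-\<pi>1)) - (w*e2 + (1-w)*e1)"
    have id1: "x1 - (X - \<sigma>*(i1 - P) + e1) = w*D + Mn" unfolding D_def Mn_def by (rule rpe_ident(1)[OF la0 x1 x2 P_def X_def])
    have id2: "x2 - (X - \<sigma>*(i2 - P) + e2) = -(1-w)*D + Mn" unfolding D_def Mn_def by (rule rpe_ident(2)[OF la0 x1 x2 P_def X_def])
    note id = id1 id2
    have r1: "w*D + Mn = 0" using id(1) h1 by simp
    have r2: "-(1-w)*D + Mn = 0" using id(2) h3 by simp
    have "D = (w*D + Mn) - (-(1-w)*D + Mn)" by (simp add: algebra_simps)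
    then have D0: "D = 0" using r1 r2 by simp
    then have M0: "Mn = 0" using r1 by simp
    show "Sol \<sigma> \<mu> \<psi> (qbar p q) (1/la) e1 e2"
      unfolding Sol_def w_def[symmetric] using D0 M0 unfolding D_def Mn_def i1_def i2_def
      by (intro exI[of _ \<pi>1] exI[of _ \<pi>2]) (simp add: algebra_simps)
  next
    assume "Sol \<sigma> \<mu> \<psi> (qbar p q) (1/la) e1 e2"
    then obtain \<pi>1 \<pi>2 where
      m: "\<sigma>*(w*(max (\<psi>*\<pi>2) (-\<mu>) - \<pi>2) + (1-w)*(max (\<psi>*\<pi>1) (-\<mu>) - \<pi>1)) = w*e2 + (1-w)*e1"
      and d: "(1/la)*(\<pi>1-\<pi>2) + \<sigma>*(max (\<psi>*\<pi>1) (-\<mu>) - max (\<psi>*\<pi>2) (-\<mu>)) = e1 - e2"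
      unfolding Sol_def w_def[symmetric] by blast
    define P where "P = w*\<pi>2 + (1-w)*\<pi>1"
    define x1 where "x1 = (\<pi>1 - \<beta>*P)/la"
    define x2 where "x2 = (\<pi>2 - \<beta>*P)/la"
    define X where "X = w*x2 + (1-w)*x1"
    define i1 where "i1 = max (\<psi>*\<pi>1) (-\<mu>)"
    define i2 where "i2 = max (\<psi>*\<pi>2) (-\<mu>)"
    define D where "D = (1/la)*(\<pi>1-\<pi>2) + \<sigma>*(i1 - i2) - (e1 - e2)"
    define Mn where "Mn = \<sigma>*(w*(i2-\<pi>2) + (1-w)*(i1-\<pi>1)) - (w*e2 + (1-w)*e1)"
    have D0: "D = 0" using d unfolding D_def i1_def i2_def by simp
    have M0: "Mn = 0" using m unfolding Mn_def i1_def i2_def by (simp add: algebra_simps)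
    have id1: "x1 - (X - \<sigma>*(i1 - P) + e1) = w*D + Mn" unfolding D_def Mn_def by (rule rpe_ident(1)[OF la0 x1_def x2_def P_def X_def])
    have id2: "x2 - (X - \<sigma>*(i2 - P) + e2) = -(1-w)*D + Mn" unfolding D_def Mn_def by (rule rpe_ident(2)[OF la0 x1_def x2_def P_def X_def])
    note id = id1 id2
    have h1: "x1 = X - \<sigma>*(i1 - P) + e1" using id(1) D0 M0 by simp
    have h3: "x2 = X - \<sigma>*(i2 - P) + e2" using id(2) D0 M0 by simp
    have h2: "\<pi>1 = la*x1 + \<beta>*P" unfolding x1_def using la0 by simp
    have h4: "\<pi>2 = la*x2 + \<beta>*P" unfolding x2_def using la0 by simp
    have "euler_solves \<beta> la \<sigma> \<mu> \<psi> e1 e2 x1 \<pi>1 x2 \<pi>2 X P X P"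
      unfolding euler_solves_def using h1 h2 h3 h4 unfolding i1_def i2_def by blast
    then show "euler_RPE_exists \<beta> la \<sigma> \<mu> \<psi> p q e1 e2"
      unfolding euler_RPE_exists_def E X_def P_def by blast
  qed
qed

lemma euler_REE_iff:
  fixes \<beta> la \<sigma> \<mu> \<psi> p q e1 e2 :: real
  assumes la: "la > 0" and pq: "2 - p - q \<noteq> 0"
  shows "euler_REE_exists \<beta> la \<sigma> \<mu> \<psi> p q e1 e2 \<longleftrightarrow>
     Sol \<sigma> \<mu> \<psi> (qbar p q) (((1-(p+q-1))*(1-\<beta>*(p+q-1)) - la*\<sigma>*(p+q-1))/la) e1 e2"
proof -
  define w where "w = qbar p q"
  define \<kappa> where "\<kappa> = ((1-(p+q-1))*(1-\<beta>*(p+q-1)) - la*\<sigma>*(p+q-1))/la"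
  have la0: "la \<noteq> 0" using la by simp
  have wr: "w*(2-p-q) = 1-p" unfolding w_def qbar_def using pq by simp
  have kk: "\<And>a. la*(\<kappa>*a) = ((1-(p+q-1))*(1-\<beta>*(p+q-1)) - la*\<sigma>*(p+q-1))*a"
    unfolding \<kappa>_def using la0 by simp
  show ?thesis
  proof
    assume "euler_REE_exists \<beta> la \<sigma> \<mu> \<psi> p q e1 e2"
    then obtain x1 \<pi>1 x2 \<pi>2 where h: "euler_solves \<beta> la \<sigma> \<mu> \<psi> e1 e2 x1 \<pi>1 x2 \<pi>2
          (p * x1 + (1 - p) * x2) (p * \<pi>1 + (1 - p) * \<pi>2)
          ((1 - q) * x1 + q * x2) ((1 - q) * \<pi>1 + q * \<pi>2)"
      unfolding euler_REE_exists_def by blast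
    define i1 where "i1 = max (\<psi>*\<pi>1) (-\<mu>)"
    define i2 where "i2 = max (\<psi>*\<pi>2) (-\<mu>)"
    have h1: "x1 = (p * x1 + (1 - p) * x2) - \<sigma>*(i1 - (p * \<pi>1 + (1 - p) * \<pi>2)) + e1"
      and h2: "\<pi>1 = la*x1 + \<beta>*(p * \<pi>1 + (1 - p) * \<pi>2)"
      and h3: "x2 = ((1 - q) * x1 + q * x2) - \<sigma>*(i2 - ((1 - q) * \<pi>1 + q * \<pi>2)) + e2"
      and h4: "\<pi>2 = la*x2 + \<beta>*((1 - q) * \<pi>1 + q * \<pi>2)"
      using h unfolding euler_solves_def i1_def[symmetric] i2_def[symmetric] by auto
    have x1: "x1*la = \<pi>1 - \<beta>*(p*\<pi>1 + (1-p)*\<pi>2)" using h2 by (simp add: algebra_simps)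
    have x2: "x2*la = \<pi>2 - \<beta>*((1-q)*\<pi>1 + q*\<pi>2)" using h4 by (simp add: algebra_simps)
    define D where "D = ((1-(p+q-1))*(1-\<beta>*(p+q-1)) - la*\<sigma>*(p+q-1))*(\<pi>1-\<pi>2) + la*\<sigma>*(i1 - i2) - la*(e1 - e2)"
    define Mn where "Mn = \<sigma>*(w*(i2-\<pi>2) + (1-w)*(i1-\<pi>1)) - (w*e2 + (1-w)*e1)"
    have id1: "la*(x1 - ((p*x1 + (1-p)*x2) - \<sigma>*(i1 - (p*\<pi>1 + (1-p)*\<pi>2)) + e1)) = w*D + la*Mn"
      unfolding D_def Mn_def by (rule ree_ident0(1)[OF wr x1 x2])
    have id2: "la*(x2 - (((1-q)*x1 + q*x2) - \<sigma>*(i2 - ((1-q)*\<pi>1 + q*\<pi>2)) + e2)) = -(1-w)*D + la*Mn"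
      unfolding D_def Mn_def by (rule ree_ident0(2)[OF wr x1 x2])
    note id = id1 id2
    have r1: "w*D + la*Mn = 0" using id(1) h1 by simp
    have r2: "-(1-w)*D + la*Mn = 0" using id(2) h3 by simp
    have "D = (w*D + la*Mn) - (-(1-w)*D + la*Mn)" by (simp add: algebra_simps)
    then have D0: "D = 0" using r1 r2 by simp
    then have "la*Mn = 0" using r1 by simp
    then have M0: "Mn = 0" using la0 by simp
    have "la*(\<kappa>*(\<pi>1-\<pi>2) + \<sigma>*(i1 - i2) - (e1 - e2)) = la*(\<kappa>*(\<pi>1-\<pi>2)) + la*\<sigma>*(i1 - i2) - la*(e1 - e2)"
      by (simp add: algebra_simps)
    also have "\<dots> = D" unfolding kk D_def by simp
    finally have "la*(\<kappa>*(\<pi>1-\<pi>2) + \<sigma>*(i1 - i2) - (e1 - e2)) = D" .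
    then have "\<kappa>*(\<pi>1-\<pi>2) + \<sigma>*(i1 - i2) - (e1 - e2) = 0" using D0 la0 by simp
    then show "Sol \<sigma> \<mu> \<psi> (qbar p q) (((1-(p+q-1))*(1-\<beta>*(p+q-1)) - la*\<sigma>*(p+q-1))/la) e1 e2"
      unfolding Sol_def w_def[symmetric] \<kappa>_def[symmetric] using M0 unfolding Mn_def i1_def i2_def
      by (intro exI[of _ \<pi>1] exI[of _ \<pi>2]) (simp add: algebra_simps)
  next
    assume "Sol \<sigma> \<mu> \<psi> (qbar p q) (((1-(p+q-1))*(1-\<beta>*(p+q-1)) - la*\<sigma>*(p+q-1))/la) e1 e2"
    then obtain \<pi>1 \<pi>2 where
      m: "\<sigma>*(w*(max (\<psi>*\<pi>2) (-\<mu>) - \<pi>2) + (1-w)*(max (\<psi>*\<pi>1) (-\<mu>) - \<pi>1)) = w*e2 + (1-w)*e1"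
      and d: "\<kappa>*(\<pi>1-\<pi>2) + \<sigma>*(max (\<psi>*\<pi>1) (-\<mu>) - max (\<psi>*\<pi>2) (-\<mu>)) = e1 - e2"
      unfolding Sol_def w_def[symmetric] \<kappa>_def[symmetric] by blast
    define x1 where "x1 = (\<pi>1 - \<beta>*(p*\<pi>1 + (1-p)*\<pi>2))/la"
    define x2 where "x2 = (\<pi>2 - \<beta>*((1-q)*\<pi>1 + q*\<pi>2))/la"
    have x1: "x1*la = \<pi>1 - \<beta>*(p*\<pi>1 + (1-p)*\<pi>2)" unfolding x1_def using la0 by simp
    have x2: "x2*la = \<pi>2 - \<beta>*((1-q)*\<pi>1 + q*\<pi>2)" unfolding x2_def using la0 by simp
    define i1 where "i1 = max (\<psi>*\<pi>1) (-\<mu>)"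
    define i2 where "i2 = max (\<psi>*\<pi>2) (-\<mu>)"
    define D where "D = ((1-(p+q-1))*(1-\<beta>*(p+q-1)) - la*\<sigma>*(p+q-1))*(\<pi>1-\<pi>2) + la*\<sigma>*(i1 - i2) - la*(e1 - e2)"
    define Mn where "Mn = \<sigma>*(w*(i2-\<pi>2) + (1-w)*(i1-\<pi>1)) - (w*e2 + (1-w)*e1)"
    have "la*(\<kappa>*(\<pi>1-\<pi>2) + \<sigma>*(i1 - i2) - (e1 - e2)) = la*(\<kappa>*(\<pi>1-\<pi>2)) + la*\<sigma>*(i1 - i2) - la*(e1 - e2)"
      by (simp add: algebra_simps)
    also have "\<dots> = D" unfolding kk D_def by simp
    finally have "la*(\<kappa>*(\<pi>1-\<pi>2) + \<sigma>*(i1 - i2) - (e1 - e2)) = D" .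
    then have D0: "D = 0" using d unfolding i1_def i2_def by simp
    have M0: "Mn = 0" using m unfolding Mn_def i1_def i2_def by (simp add: algebra_simps)
    have id1: "la*(x1 - ((p*x1 + (1-p)*x2) - \<sigma>*(i1 - (p*\<pi>1 + (1-p)*\<pi>2)) + e1)) = w*D + la*Mn"
      unfolding D_def Mn_def by (rule ree_ident0(1)[OF wr x1 x2])
    have id2: "la*(x2 - (((1-q)*x1 + q*x2) - \<sigma>*(i2 - ((1-q)*\<pi>1 + q*\<pi>2)) + e2)) = -(1-w)*D + la*Mn"
      unfolding D_def Mn_def by (rule ree_ident0(2)[OF wr x1 x2])
    note id = id1 id2
    have "la*(x1 - ((p*x1 + (1-p)*x2) - \<sigma>*(i1 - (p*\<pi>1 + (1-p)*\<pi>2)) + e1)) = 0" using id(1) D0 M0 by simp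
    then have h1: "x1 = (p*x1 + (1-p)*x2) - \<sigma>*(i1 - (p*\<pi>1 + (1-p)*\<pi>2)) + e1" using la0 by simp
    have "la*(x2 - (((1-q)*x1 + q*x2) - \<sigma>*(i2 - ((1-q)*\<pi>1 + q*\<pi>2)) + e2)) = 0" using id(2) D0 M0 by simp
    then have h3: "x2 = ((1-q)*x1 + q*x2) - \<sigma>*(i2 - ((1-q)*\<pi>1 + q*\<pi>2)) + e2" using la0 by simp
    have h2: "\<pi>1 = la*x1 + \<beta>*(p*\<pi>1 + (1-p)*\<pi>2)" using x1 by (simp add: algebra_simps)
    have h4: "\<pi>2 = la*x2 + \<beta>*((1-q)*\<pi>1 + q*\<pi>2)" using x2 by (simp add: algebra_simps)
    show "euler_REE_exists \<beta> la \<sigma> \<mu> \<psi> p q e1 e2"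
      unfolding euler_REE_exists_def euler_solves_def using h1 h2 h3 h4 unfolding i1_def i2_def by blast
  qed
qed



lemma sum_geo_if:
  fixes \<beta> c e Fe :: real
  assumes "\<bar>\<beta>\<bar> < 1"
  shows "(\<Sum>n. \<beta>^n * (c + (if n = 0 then e else Fe))) = (c + Fe)/(1-\<beta>) + (e - Fe)"
proof -
  have g: "(\<lambda>n. \<beta>^n) sums (1/(1-\<beta>))" using geometric_sums[of \<beta>] assms by simp
  have a: "(\<lambda>n. \<beta>^n * (c+Fe)) sums (1/(1-\<beta>) * (c+Fe))" using sums_mult2[OF g] by simp
  have b: "(\<lambda>n. if n = 0 then e - Fe else 0) sums (e - Fe)" using sums_single[of 0 "\<lambda>_. e - Fe"] by simp
  have "(\<lambda>n. \<beta>^n * (c+Fe) + (if n = 0 then e - Fe else 0)) sums (1/(1-\<beta>) * (c+Fe) + (e - Fe))"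
    using sums_add[OF a b] by simp
  moreover have "(\<lambda>n. \<beta>^n * (c+Fe) + (if n = 0 then e - Fe else 0)) = (\<lambda>n. \<beta>^n * (c + (if n = 0 then e else Fe)))"
    by (auto simp: algebra_simps)
  ultimately have "(\<lambda>n. \<beta>^n * (c + (if n = 0 then e else Fe))) sums ((c + Fe)/(1-\<beta>) + (e - Fe))" by simp
  then show ?thesis using sums_unique by metis
qed

lemma sum_geo:
  fixes r d :: real
  assumes "\<bar>r\<bar> < 1"
  shows "(\<Sum>n. r^n * d) = d/(1-r)"
proof -
  have g: "(\<lambda>n. r^n) sums (1/(1-r))" using geometric_sums[of r] assms by simp
  have "(\<lambda>n. r^n * d) sums (1/(1-r) * d)" using sums_mult2[OF g] by simp
  then show ?thesis using sums_unique by fastforce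
qed

lemma ih_eqs_iff:
  assumes "0 < \<beta>" "\<beta> < 1" "0 < \<xi>" "\<xi> < 1"
  shows "ih_eqs \<beta> \<xi> \<sigma> \<mu> \<psi> Fx F\<pi> Fi Feps eps x \<pi> i \<longleftrightarrow>
     x = (((1 - \<beta>) * Fx + \<sigma> * F\<pi> - \<sigma> * \<beta> * Fi) + Feps)/(1-\<beta>) + (eps - Feps) - \<sigma> * i \<and>
     \<pi> = lam \<beta> \<xi> * x + (\<xi> * \<beta> * lam \<beta> \<xi> * Fx + (1 - \<xi>) * \<beta> * F\<pi>)/(1 - \<xi>*\<beta>) \<and>
     i = max (\<psi> * \<pi>) (- \<mu>)"
proof -
  have b: "\<bar>\<beta>\<bar> < 1" using assms by simp
  have "\<xi>*\<beta> < 1*1" using assms by (intro mult_strict_mono) auto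
  then have xb: "\<bar>\<xi>*\<beta>\<bar> < 1" using assms by simp
  show ?thesis unfolding ih_eqs_def sum_geo_if[OF b] sum_geo[OF xb] by simp
qed

lemma ih_RPE_iff:
  fixes \<beta> \<xi> \<sigma> \<mu> \<psi> p q e1 e2 :: real
  assumes ab: "0 < \<beta>" "\<beta> < 1" "0 < \<xi>" "\<xi> < 1"
  shows "ih_RPE_exists \<beta> \<xi> \<sigma> \<mu> \<psi> p q e1 e2 \<longleftrightarrow> euler_RPE_exists \<beta> (lam \<beta> \<xi>) \<sigma> \<mu> \<psi> p q e1 e2"
proof -
  define w where "w = qbar p q"
  define la where "la = lam \<beta> \<xi>"
  have E: "\<And>a b. Eavg p q a b = w*b + (1-w)*a" by (simp add: Eavg_def w_def)
  have b1: "1 - \<beta> \<noteq> 0" using ab by simp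
  have "\<xi>*\<beta> < 1*1" using ab by (intro mult_strict_mono) auto
  then have xb1: "1 - \<xi>*\<beta> \<noteq> 0" by simp
  have key: "(\<exists>i1 i2. ih_eqs \<beta> \<xi> \<sigma> \<mu> \<psi> (w*x2 + (1-w)*x1) (w*\<pi>2 + (1-w)*\<pi>1) (w*i2 + (1-w)*i1) (w*e2 + (1-w)*e1) e1 x1 \<pi>1 i1
        \<and> ih_eqs \<beta> \<xi> \<sigma> \<mu> \<psi> (w*x2 + (1-w)*x1) (w*\<pi>2 + (1-w)*\<pi>1) (w*i2 + (1-w)*i1) (w*e2 + (1-w)*e1) e2 x2 \<pi>2 i2)
     \<longleftrightarrow> euler_solves \<beta> la \<sigma> \<mu> \<psi> e1 e2 x1 \<pi>1 x2 \<pi>2 (w*x2 + (1-w)*x1) (w*\<pi>2 + (1-w)*\<pi>1) (w*x2 + (1-w)*x1) (w*\<pi>2 + (1-w)*\<pi>1)"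
    for x1 \<pi>1 x2 \<pi>2
  proof -
    define X where "X = w*x2 + (1-w)*x1"
    define P where "P = w*\<pi>2 + (1-w)*\<pi>1"
    define Ee where "Ee = w*e2 + (1-w)*e1"
    define i1 where "i1 = max (\<psi>*\<pi>1) (-\<mu>)"
    define i2 where "i2 = max (\<psi>*\<pi>2) (-\<mu>)"
    define I where "I = w*i2 + (1-w)*i1"
    define c where "c = (1 - \<beta>) * X + \<sigma> * P - \<sigma> * \<beta> * I"
    define a1 where "a1 = x1 - (- \<sigma> * i1 + (c + Ee)/(1-\<beta>) + (e1 - Ee))"
    define a2 where "a2 = x2 - (- \<sigma> * i2 + (c + Ee)/(1-\<beta>) + (e2 - Ee))"
    define A1 where "A1 = x1 - (X - \<sigma>*(i1 - P) + e1)"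
    define A2 where "A2 = x2 - (X - \<sigma>*(i2 - P) + e2)"
    define Ab where "Ab = \<sigma>*(I - P) - Ee"
    define b1' where "b1' = \<pi>1 - (la * x1 + (\<xi> * \<beta> * la * X + (1 - \<xi>) * \<beta> * P)/(1 - \<xi>*\<beta>))"
    define b2' where "b2' = \<pi>2 - (la * x2 + (\<xi> * \<beta> * la * X + (1 - \<xi>) * \<beta> * P)/(1 - \<xi>*\<beta>))"
    define B1 where "B1 = \<pi>1 - (la*x1 + \<beta>*P)"
    define B2 where "B2 = \<pi>2 - (la*x2 + \<beta>*P)"
    define Bb where "Bb = P - la*X - \<beta>*P"
    have Aavg: "w*A2 + (1-w)*A1 = Ab" unfolding A1_def A2_def Ab_def X_def P_def I_def Ee_def by (simp add: algebra_simps)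
    have Bavg: "w*B2 + (1-w)*B1 = Bb" unfolding B1_def B2_def Bb_def X_def P_def by (simp add: algebra_simps)
    have aA1: "(1-\<beta>)*(a1 - A1) = \<beta>*Ab" unfolding a1_def A1_def Ab_def c_def using b1 by (simp add: field_simps)
    have aA2: "(1-\<beta>)*(a2 - A2) = \<beta>*Ab" unfolding a2_def A2_def Ab_def c_def using b1 by (simp add: field_simps)
    have bB1: "(1-\<xi>*\<beta>)*(b1' - B1) = \<xi>*\<beta>*Bb" unfolding b1'_def B1_def Bb_def using xb1 by (simp add: field_simps)
    have bB2: "(1-\<xi>*\<beta>)*(b2' - B2) = \<xi>*\<beta>*Bb" unfolding b2'_def B2_def Bb_def using xb1 by (simp add: field_simps)
    have ihs: "(\<exists>i1 i2. ih_eqs \<beta> \<xi> \<sigma> \<mu> \<psi> (w*x2 + (1-w)*x1) (w*\<pi>2 + (1-w)*\<pi>1) (w*i2 + (1-w)*i1) (w*e2 + (1-w)*e1) e1 x1 \<pi>1 i1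
        \<and> ih_eqs \<beta> \<xi> \<sigma> \<mu> \<psi> (w*x2 + (1-w)*x1) (w*\<pi>2 + (1-w)*\<pi>1) (w*i2 + (1-w)*i1) (w*e2 + (1-w)*e1) e2 x2 \<pi>2 i2)
       \<longleftrightarrow> a1 = 0 \<and> a2 = 0 \<and> b1' = 0 \<and> b2' = 0"
      unfolding ih_eqs_iff[OF ab] a1_def a2_def b1'_def b2'_def c_def I_def i1_def i2_def X_def P_def Ee_def la_def
      by auto
    have eus: "euler_solves \<beta> la \<sigma> \<mu> \<psi> e1 e2 x1 \<pi>1 x2 \<pi>2 (w*x2 + (1-w)*x1) (w*\<pi>2 + (1-w)*\<pi>1) (w*x2 + (1-w)*x1) (w*\<pi>2 + (1-w)*\<pi>1)
       \<longleftrightarrow> A1 = 0 \<and> A2 = 0 \<and> B1 = 0 \<and> B2 = 0"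
      unfolding euler_solves_def A1_def A2_def B1_def B2_def X_def[symmetric] P_def[symmetric] i1_def[symmetric] i2_def[symmetric]
      by (simp only: right_minus_eq) blast
    have "a1 = 0 \<and> a2 = 0 \<and> b1' = 0 \<and> b2' = 0 \<longleftrightarrow> A1 = 0 \<and> A2 = 0 \<and> B1 = 0 \<and> B2 = 0"
    proof
      assume h: "a1 = 0 \<and> a2 = 0 \<and> b1' = 0 \<and> b2' = 0"
      have "(1-\<beta>)*(-A1) = \<beta>*Ab" "(1-\<beta>)*(-A2) = \<beta>*Ab" using aA1 aA2 h by auto
      then have "(1-\<beta>)*(-(w*A2 + (1-w)*A1)) = \<beta>*Ab"
      proof -
        assume q1: "(1-\<beta>)*(-A1) = \<beta>*Ab" and q2: "(1-\<beta>)*(-A2) = \<beta>*Ab"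
        have "(1-\<beta>)*(-(w*A2 + (1-w)*A1)) = w*((1-\<beta>)*(-A2)) + (1-w)*((1-\<beta>)*(-A1))" by (simp add: algebra_simps)
        also have "\<dots> = w*(\<beta>*Ab) + (1-w)*(\<beta>*Ab)" by (simp only: q1 q2)
        also have "\<dots> = \<beta>*Ab" by (simp add: algebra_simps)
        finally show ?thesis .
      qed
      then have "(1-\<beta>)*(-Ab) = \<beta>*Ab" using Aavg by simp
      then have Ab0: "Ab = 0" by (simp add: algebra_simps)
      have "(1-\<xi>*\<beta>)*(-B1) = \<xi>*\<beta>*Bb" "(1-\<xi>*\<beta>)*(-B2) = \<xi>*\<beta>*Bb" using bB1 bB2 h by auto
      then have "(1-\<xi>*\<beta>)*(-(w*B2 + (1-w)*B1)) = \<xi>*\<beta>*Bb"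
      proof -
        assume q1: "(1-\<xi>*\<beta>)*(-B1) = \<xi>*\<beta>*Bb" and q2: "(1-\<xi>*\<beta>)*(-B2) = \<xi>*\<beta>*Bb"
        have "(1-\<xi>*\<beta>)*(-(w*B2 + (1-w)*B1)) = w*((1-\<xi>*\<beta>)*(-B2)) + (1-w)*((1-\<xi>*\<beta>)*(-B1))" by (simp add: algebra_simps)
        also have "\<dots> = w*(\<xi>*\<beta>*Bb) + (1-w)*(\<xi>*\<beta>*Bb)" by (simp only: q1 q2)
        also have "\<dots> = \<xi>*\<beta>*Bb" by (simp add: algebra_simps)
        finally show ?thesis .
      qed
      then have "(1-\<xi>*\<beta>)*(-Bb) = \<xi>*\<beta>*Bb" using Bavg by simp
      then have Bb0: "Bb = 0" by (simp add: algebra_simps)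
      show "A1 = 0 \<and> A2 = 0 \<and> B1 = 0 \<and> B2 = 0" using aA1 aA2 bB1 bB2 h Ab0 Bb0 b1 xb1 by auto
    next
      assume h: "A1 = 0 \<and> A2 = 0 \<and> B1 = 0 \<and> B2 = 0"
      then have "Ab = 0" "Bb = 0" using Aavg Bavg by auto
      then show "a1 = 0 \<and> a2 = 0 \<and> b1' = 0 \<and> b2' = 0" using aA1 aA2 bB1 bB2 h b1 xb1 by auto
    qed
    then show ?thesis using ihs eus by simp
  qed
  show ?thesis
    unfolding ih_RPE_exists_def euler_RPE_exists_def E la_def[symmetric] using key by blast
qed



lemma q1_sol:
  fixes \<sigma> \<mu> \<psi> \<kappa> e1 e2 :: real
  assumes s: "\<sigma> > 0" and mu: "\<mu> > 0" and psi: "\<psi> > 1" and k: "\<kappa> > 0" and e2: "e2 \<ge> 0"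
  shows "Sol \<sigma> \<mu> \<psi> 1 \<kappa> e1 e2"
proof -
  have sp1: "\<sigma>*(\<psi>-1) > 0" using s psi by simp
  define \<pi>2 where "\<pi>2 = e2/(\<sigma>*(\<psi>-1))"
  have p2: "\<pi>2 \<ge> 0" unfolding \<pi>2_def using sp1 e2 by simp
  have "\<psi>*\<pi>2 \<ge> 0" using p2 psi by simp
  then have f2: "max (\<psi>*\<pi>2) (-\<mu>) = \<psi>*\<pi>2" using mu by simp
  have m: "\<sigma>*(\<psi>*\<pi>2 - \<pi>2) = e2"
  proof -
    have "\<sigma>*(\<psi>*\<pi>2 - \<pi>2) = \<sigma>*(\<psi>-1)*\<pi>2" by (simp add: algebra_simps)
    also have "\<dots> = e2" unfolding \<pi>2_def using s psi by simp
    finally show ?thesis .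
  qed
  define u where "u = e1 - e2 + \<kappa>*\<pi>2 + \<sigma>*(\<psi>*\<pi>2)"
  define \<pi>1 where "\<pi>1 = min (u/(\<kappa>+\<sigma>*\<psi>)) ((u+\<sigma>*\<mu>)/\<kappa>)"
  have i1: "\<kappa>*\<pi>1 + \<sigma>*max (\<psi>*\<pi>1) (-\<mu>) = u" unfolding \<pi>1_def by (rule H_inv[OF k s psi mu])
  have "\<kappa>*(\<pi>1-\<pi>2) + \<sigma>*(max (\<psi>*\<pi>1) (-\<mu>) - max (\<psi>*\<pi>2) (-\<mu>)) = e1 - e2"
    using i1 unfolding f2 u_def by (simp add: algebra_simps)
  moreover have "\<sigma>*(1*(max (\<psi>*\<pi>2) (-\<mu>) - \<pi>2) + (1-1)*(max (\<psi>*\<pi>1) (-\<mu>) - \<pi>1)) = 1*e2 + (1-1)*e1"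
    using m f2 by simp
  ultimately show ?thesis unfolding Sol_def by blast
qed

lemma Sol_char:
  fixes \<sigma> \<mu> \<psi> w \<kappa> e1 e2 :: real
  assumes s: "\<sigma> > 0" and mu: "\<mu> > 0" and psi: "\<psi> > 1" and w0: "0 \<le> w" and w1: "w < 1"
    and k: "\<kappa> > 0" and e2: "e2 \<ge> 0"
  shows "Sol \<sigma> \<mu> \<psi> w \<kappa> e1 e2 \<longleftrightarrow>
    e1 \<ge> e2 - (e2 - gst \<sigma> \<mu> \<psi>)/(mm \<sigma> \<psi> w \<kappa> + 1 - w)"
proof -
  have D: "mm \<sigma> \<psi> w \<kappa> + 1 - w > 0" using mm_facts(1)[OF s psi w0 w1 k] w1 by linarith
  have "e1 \<ge> e2 - (e2 - gst \<sigma> \<mu> \<psi>)/(mm \<sigma> \<psi> w \<kappa> + 1 - w) \<longleftrightarrow>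
        e2 - e1 \<le> (e2 - gst \<sigma> \<mu> \<psi>)/(mm \<sigma> \<psi> w \<kappa> + 1 - w)" by linarith
  also have "\<dots> \<longleftrightarrow> (e2-e1)*(mm \<sigma> \<psi> w \<kappa> + 1 - w) \<le> e2 - gst \<sigma> \<mu> \<psi>"
    using D by (simp add: pos_le_divide_eq)
  finally have eq: "e1 \<ge> e2 - (e2 - gst \<sigma> \<mu> \<psi>)/(mm \<sigma> \<psi> w \<kappa> + 1 - w) \<longleftrightarrow>
        (e2-e1)*(mm \<sigma> \<psi> w \<kappa> + 1 - w) \<le> e2 - gst \<sigma> \<mu> \<psi>" .
  have ks: "-\<sigma> < \<kappa>" using s k by simp
  show ?thesis
  proof
    assume "Sol \<sigma> \<mu> \<psi> w \<kappa> e1 e2"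
    then obtain \<pi>1 \<pi>2 where
      "\<sigma>*(w*(max (\<psi>*\<pi>2) (-\<mu>) - \<pi>2) + (1-w)*(max (\<psi>*\<pi>1) (-\<mu>) - \<pi>1)) = w*e2 + (1-w)*e1"
      "\<kappa>*(\<pi>1-\<pi>2) + \<sigma>*(max (\<psi>*\<pi>1) (-\<mu>) - max (\<psi>*\<pi>2) (-\<mu>)) = e1 - e2"
      unfolding Sol_def by blast
    from necessity[OF s mu psi w0 w1 k ks order_refl this] show "e1 \<ge> e2 - (e2 - gst \<sigma> \<mu> \<psi>)/(mm \<sigma> \<psi> w \<kappa> + 1 - w)"
      using eq by simp
  next
    assume "e1 \<ge> e2 - (e2 - gst \<sigma> \<mu> \<psi>)/(mm \<sigma> \<psi> w \<kappa> + 1 - w)"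
    then have "(e2-e1)*(mm \<sigma> \<psi> w \<kappa> + 1 - w) \<le> e2 - gst \<sigma> \<mu> \<psi>" using eq by simp
    from sufficiency[OF s mu psi w0 w1 k e2 this] show "Sol \<sigma> \<mu> \<psi> w \<kappa> e1 e2" unfolding Sol_def .
  qed
qed

lemma Sol_nec:
  fixes \<sigma> \<mu> \<psi> w \<kappa> \<kappa>0 e1 e2 :: real
  assumes s: "\<sigma> > 0" and mu: "\<mu> > 0" and psi: "\<psi> > 1" and w0: "0 \<le> w" and w1: "w < 1"
    and k0: "\<kappa>0 > 0" and kl: "-\<sigma> < \<kappa>" and kk: "\<kappa> \<le> \<kappa>0"
    and S: "Sol \<sigma> \<mu> \<psi> w \<kappa> e1 e2"
  shows "e1 \<ge> e2 - (e2 - gst \<sigma> \<mu> \<psi>)/(mm \<sigma> \<psi> w \<kappa>0 + 1 - w)"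
proof -
  have D: "mm \<sigma> \<psi> w \<kappa>0 + 1 - w > 0" using mm_facts(1)[OF s psi w0 w1 k0] w1 by linarith
  obtain \<pi>1 \<pi>2 where
      "\<sigma>*(w*(max (\<psi>*\<pi>2) (-\<mu>) - \<pi>2) + (1-w)*(max (\<psi>*\<pi>1) (-\<mu>) - \<pi>1)) = w*e2 + (1-w)*e1"
      "\<kappa>*(\<pi>1-\<pi>2) + \<sigma>*(max (\<psi>*\<pi>1) (-\<mu>) - max (\<psi>*\<pi>2) (-\<mu>)) = e1 - e2"
      using S unfolding Sol_def by blast
  from necessity[OF s mu psi w0 w1 k0 kl kk this]
  have "(e2-e1)*(mm \<sigma> \<psi> w \<kappa>0 + 1 - w) \<le> e2 - gst \<sigma> \<mu> \<psi>" .
  then have "e2 - e1 \<le> (e2 - gst \<sigma> \<mu> \<psi>)/(mm \<sigma> \<psi> w \<kappa>0 + 1 - w)" using D by (simp add: pos_le_divide_eq)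
  then show ?thesis by linarith
qed

lemma thr_strict:
  fixes \<sigma> \<mu> \<psi> w \<kappa> \<kappa>0 e2 :: real
  assumes s: "\<sigma> > 0" and mu: "\<mu> > 0" and psi: "\<psi> > 1" and w0: "0 < w" and w1: "w < 1"
    and k0: "\<kappa>0 > 0" and kk: "\<kappa>0 < \<kappa>" and e2: "e2 \<ge> 0"
  shows "e2 - (e2 - gst \<sigma> \<mu> \<psi>)/(mm \<sigma> \<psi> w \<kappa> + 1 - w) < e2 - (e2 - gst \<sigma> \<mu> \<psi>)/(mm \<sigma> \<psi> w \<kappa>0 + 1 - w)"
proof -
  have k: "\<kappa> > 0" using k0 kk by simp
  have w0': "0 \<le> w" using w0 by simp
  have sp: "\<sigma>*\<psi> > 0" using s psi by simp
  have a: "(1-w)*\<sigma>/\<kappa> < (1-w)*\<sigma>/\<kappa>0" using w1 s k0 kk by (intro divide_strict_left_mono) auto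
  have b: "w*\<sigma>*(\<psi>-1)/(\<kappa>+\<sigma>*\<psi>) < w*\<sigma>*(\<psi>-1)/(\<kappa>0+\<sigma>*\<psi>)"
    using w0 s psi k0 kk sp by (intro divide_strict_left_mono) (auto simp: add_pos_pos)
  have mlt: "mm \<sigma> \<psi> w \<kappa> < mm \<sigma> \<psi> w \<kappa>0" unfolding mm_def using a b by (auto simp: min_def)
  have D: "mm \<sigma> \<psi> w \<kappa> + 1 - w > 0" using mm_facts(1)[OF s psi w0' w1 k] w1 by linarith
  have G: "e2 - gst \<sigma> \<mu> \<psi> > 0"
  proof -
    have "\<mu>/\<psi> < \<mu>" using mu psi by (simp add: divide_less_eq)
    then have "gst \<sigma> \<mu> \<psi> < 0" unfolding gst_def using s by (simp add: mult_pos_neg)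
    then show ?thesis using e2 by simp
  qed
  have "(e2 - gst \<sigma> \<mu> \<psi>)/(mm \<sigma> \<psi> w \<kappa>0 + 1 - w) < (e2 - gst \<sigma> \<mu> \<psi>)/(mm \<sigma> \<psi> w \<kappa> + 1 - w)"
    using G D mlt by (intro divide_strict_left_mono) auto
  then show ?thesis by simp
qed



theorem proposition9:
  fixes \<beta> \<xi> \<sigma> \<mu> \<psi> p q e2 :: real
  assumes "0 < \<beta>" "\<beta> < 1" "0 < \<xi>" "\<xi> < 1"
    and "\<sigma> > 0" "\<mu> > 0" "\<psi> > 1"
    and "0 < p" "p \<le> 1" "0 < q" "q \<le> 1" "(p, q) \<noteq> (1, 1)"
    and "e2 \<ge> 0"
  shows "\<exists>eRPE :: ereal. eRPE < \<infinity> \<and>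
           (\<forall>e1 :: real.
              (ih_RPE_exists \<beta> \<xi> \<sigma> \<mu> \<psi> p q e1 e2 \<longleftrightarrow> ereal e1 \<ge> eRPE) \<and>
              (euler_RPE_exists \<beta> (lam \<beta> \<xi>) \<sigma> \<mu> \<psi> p q e1 e2 \<longleftrightarrow> ereal e1 \<ge> eRPE)) \<and>
           (q = 1 \<longrightarrow> eRPE = - \<infinity>) \<and>
           (\<forall>eREE :: ereal. eREE < \<infinity> \<longrightarrow>
              (\<forall>e1 :: real. euler_REE_exists \<beta> (lam \<beta> \<xi>) \<sigma> \<mu> \<psi> p q e1 e2 \<longleftrightarrow> ereal e1 \<ge> eREE) \<longrightarrow>
              (eREE \<ge> eRPE \<longleftrightarrow> p + q \<ge> 1))"
proof -
  note ab = assms(1-4)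
  have s: "\<sigma> > 0" and mu: "\<mu> > 0" and psi: "\<psi> > 1" and e2: "e2 \<ge> 0" using assms by auto
  define la where "la = lam \<beta> \<xi>"
  have la: "la > 0"
  proof -
    have "\<xi>*\<beta> < 1*1" using ab by (intro mult_strict_mono) auto
    then have "1 - \<xi>*\<beta> > 0" by simp
    moreover have "1 - \<xi> > 0" using ab by simp
    ultimately show ?thesis unfolding la_def lam_def using ab by simp
  qed
  define w where "w = qbar p q"
  define \<kappa>0 where "\<kappa>0 = 1/la"
  have k0: "\<kappa>0 > 0" unfolding \<kappa>0_def using la by simp
  have RPE1: "ih_RPE_exists \<beta> \<xi> \<sigma> \<mu> \<psi> p q e1 e2 \<longleftrightarrow> Sol \<sigma> \<mu> \<psi> w \<kappa>0 e1 e2" for e1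
    using ih_RPE_iff[OF ab] euler_RPE_iff[OF la] unfolding w_def \<kappa>0_def la_def by simp
  have RPE2: "euler_RPE_exists \<beta> (lam \<beta> \<xi>) \<sigma> \<mu> \<psi> p q e1 e2 \<longleftrightarrow> Sol \<sigma> \<mu> \<psi> w \<kappa>0 e1 e2" for e1
    using euler_RPE_iff[OF la] unfolding w_def \<kappa>0_def la_def by simp
  show ?thesis
  proof (cases "q = 1")
    case True
    then have p1: "p < 1" using assms(9,12) by auto
    have w1: "w = 1" unfolding w_def qbar_def True using p1 by simp
    have all: "Sol \<sigma> \<mu> \<psi> w \<kappa>0 e1 e2" for e1 unfolding w1 by (rule q1_sol[OF s mu psi k0 e2])
    have A: "ih_RPE_exists \<beta> \<xi> \<sigma> \<mu> \<psi> p q e1 e2" for e1 using RPE1 all by simp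
    have B: "euler_RPE_exists \<beta> (lam \<beta> \<xi>) \<sigma> \<mu> \<psi> p q e1 e2" for e1 using RPE2 all by simp
    show ?thesis
      using A B by (intro exI[of _ "-\<infinity>"]) (simp add: True assms(8) less_imp_le)
  next
    case False
    then have q1: "q < 1" using assms(11) by simp
    have pq: "2 - p - q > 0" using q1 assms(9) by simp
    have w0: "0 \<le> w" unfolding w_def qbar_def using pq assms(9) by simp
    have w1: "w < 1" unfolding w_def qbar_def using pq q1 by (simp add: divide_less_eq)
    define \<theta>0 where "\<theta>0 = e2 - (e2 - gst \<sigma> \<mu> \<psi>)/(mm \<sigma> \<psi> w \<kappa>0 + 1 - w)"
    have char0: "Sol \<sigma> \<mu> \<psi> w \<kappa>0 e1 e2 \<longleftrightarrow> e1 \<ge> \<theta>0" for e1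
      unfolding \<theta>0_def by (rule Sol_char[OF s mu psi w0 w1 k0 e2])
    define \<rho> where "\<rho> = p+q-1"
    define \<kappa>R where "\<kappa>R = ((1-(p+q-1))*(1-\<beta>*(p+q-1)) - la*\<sigma>*(p+q-1))/la"
    have REE: "euler_REE_exists \<beta> (lam \<beta> \<xi>) \<sigma> \<mu> \<psi> p q e1 e2 \<longleftrightarrow> Sol \<sigma> \<mu> \<psi> w \<kappa>R e1 e2" for e1
      using euler_REE_iff[OF la, of p q \<beta> \<sigma> \<mu> \<psi> e1 e2] pq unfolding w_def \<kappa>R_def la_def by simp
    have la0: "la \<noteq> 0" using la by simp
    have kdiff: "\<kappa>R - \<kappa>0 = \<rho>*(\<beta>*\<rho> - 1 - \<beta> - la*\<sigma>)/la"
      unfolding \<kappa>R_def \<kappa>0_def \<rho>_def using la0 by (simp add: field_simps)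
    have ksum: "\<kappa>R + \<sigma> = (1-\<rho>)*((1-\<beta>*\<rho>) + la*\<sigma>)/la"
      unfolding \<kappa>R_def \<rho>_def using la0 by (simp add: field_simps)
    have r1: "\<rho> < 1" unfolding \<rho>_def using q1 assms(9) by simp
    have ls: "la*\<sigma> > 0" using la s by simp
    have "\<forall>eREE :: ereal. eREE < \<infinity> \<longrightarrow>
              (\<forall>e1 :: real. euler_REE_exists \<beta> (lam \<beta> \<xi>) \<sigma> \<mu> \<psi> p q e1 e2 \<longleftrightarrow> ereal e1 \<ge> eREE) \<longrightarrow>
              (eREE \<ge> ereal \<theta>0 \<longleftrightarrow> p + q \<ge> 1)"
    proof (intro allI impI)
      fix eREE :: ereal
      assume fin: "eREE < \<infinity>"
        and ch: "\<forall>e1 :: real. euler_REE_exists \<beta> (lam \<beta> \<xi>) \<sigma> \<mu> \<psi> p q e1 e2 \<longleftrightarrow> ereal e1 \<ge> eREE"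
      show "eREE \<ge> ereal \<theta>0 \<longleftrightarrow> p + q \<ge> 1"
      proof (cases "p + q \<ge> 1")
        case True
        then have rho0: "\<rho> \<ge> 0" unfolding \<rho>_def by simp
        have "\<beta>*\<rho> \<le> \<beta>*1" using ab r1 by (intro mult_left_mono) auto
        then have "\<beta>*\<rho> - 1 - \<beta> - la*\<sigma> < 0" using ls by simp
        then have "\<rho>*(\<beta>*\<rho> - 1 - \<beta> - la*\<sigma>) \<le> 0" using rho0 by (simp add: mult_nonneg_nonpos)
        then have "\<rho>*(\<beta>*\<rho> - 1 - \<beta> - la*\<sigma>)/la \<le> 0" using la by (simp add: divide_nonpos_pos)
        then have kle: "\<kappa>R \<le> \<kappa>0" using kdiff by simp
        have "\<beta>*\<rho> < 1*1" using ab rho0 r1 by (intro mult_strict_mono) auto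
        then have "(1-\<beta>*\<rho>) + la*\<sigma> > 0" using ls by simp
        then have "(1-\<rho>)*((1-\<beta>*\<rho>) + la*\<sigma>)/la > 0" using r1 la by simp
        then have kgt: "-\<sigma> < \<kappa>R" using ksum by simp
        have "eREE \<ge> ereal \<theta>0"
        proof (rule ccontr)
          assume "\<not> eREE \<ge> ereal \<theta>0"
          then have lt: "eREE < ereal \<theta>0" by simp
          obtain e1 where e1: "eREE \<le> ereal e1" "e1 < \<theta>0"
          proof (cases eREE)
            case (real r) then show ?thesis using lt that[of r] by simp
          next
            case PInf then show ?thesis using fin by simp
          next
            case MInf then show ?thesis using that[of "\<theta>0 - 1"] by simp
          qed
          then have "euler_REE_exists \<beta> (lam \<beta> \<xi>) \<sigma> \<mu> \<psi> p q e1 e2" using ch by simp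
          then have "Sol \<sigma> \<mu> \<psi> w \<kappa>R e1 e2" using REE by simp
          from Sol_nec[OF s mu psi w0 w1 k0 kgt kle this] have "e1 \<ge> \<theta>0" unfolding \<theta>0_def .
          then show False using e1 by simp
        qed
        then show ?thesis using True by simp
      next
        case False
        then have rho0: "\<rho> < 0" unfolding \<rho>_def by simp
        have p1: "p < 1" using False assms(10) by simp
        have wpos: "0 < w" unfolding w_def qbar_def using p1 pq by simp
        have "\<beta>*\<rho> < 0" using ab rho0 by (simp add: mult_pos_neg)
        then have "\<beta>*\<rho> - 1 - \<beta> - la*\<sigma> < 0" using ls ab by simp
        then have "\<rho>*(\<beta>*\<rho> - 1 - \<beta> - la*\<sigma>) > 0" using rho0 by (simp add: mult_neg_neg)
        then have "\<rho>*(\<beta>*\<rho> - 1 - \<beta> - la*\<sigma>)/la > 0" using la by simp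
        then have kgt: "\<kappa>0 < \<kappa>R" using kdiff by simp
        have kR: "\<kappa>R > 0" using kgt k0 by simp
        define \<theta>R where "\<theta>R = e2 - (e2 - gst \<sigma> \<mu> \<psi>)/(mm \<sigma> \<psi> w \<kappa>R + 1 - w)"
        have "\<theta>R < \<theta>0" unfolding \<theta>R_def \<theta>0_def by (rule thr_strict[OF s mu psi wpos w1 k0 kgt e2])
        have "Sol \<sigma> \<mu> \<psi> w \<kappa>R \<theta>R e2" using Sol_char[OF s mu psi w0 w1 kR e2] unfolding \<theta>R_def by simp
        then have "euler_REE_exists \<beta> (lam \<beta> \<xi>) \<sigma> \<mu> \<psi> p q \<theta>R e2" using REE by simp
        then have "ereal \<theta>R \<ge> eREE" using ch by simp
        moreover have "ereal \<theta>R < ereal \<theta>0" using \<open>\<theta>R < \<theta>0\<close> by simp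
        ultimately have "eREE < ereal \<theta>0" by (rule le_less_trans)
        then show ?thesis using False by simp
      qed
    qed
    then show ?thesis
      by (intro exI[of _ "ereal \<theta>0"]) (simp add: RPE1 RPE2 char0 False)
  qed
qed

end
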